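(* Let $n\ge2$, $d=n-1$, $\boldsymbol\nu\in\mathbb C^d$, $\boldsymbol m\in\mathbb Z^{d+1}$, and suppose there is $a\in[-\frac12,0]$ with $-\frac14-\frac a2<\operatorname{Re}\nu_l<-\frac a2$ for all $l=1,\dots,d$. Then for every $x>0$ and $u\in\mathbb C$ with $|u|=1$, the series of integrals $$J_{\boldsymbol\nu,\boldsymbol m}(x,u)=\frac{2^{d-1}}\pi\sum_{m\in\mathbb Z}u^m\int_{\mathbb R_+^d}j_{(0,m_{d+1}+m)}(xy_1\cdots y_d)\prod_{l=1}^dy_l^{2\nu_l-1}j_{(0,m_l+m)}(xy_l^{-1})\,dy_d\cdots dy_1$$ is absolutely convergent, i.e. $\sum_{m\in\mathbb Z}\int_{\mathbb R_+^d}\big|j_{(0,m_{d+1}+m)}(xy_1\cdots y_d)\prod_ly_l^{2\nu_l-1}j_{(0,m_l+m)}(xy_l^{-1})\big|\,d\boldsymbol y<\infty$.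
   Context: For $m\in\mathbb Z$ and $x>0$, $j_{(0,m)}(x)=2\pi i^mJ_m(4\pi x)$, with $J_m$ the classical $J$-Bessel function. *)

theory Defs
  imports "HOL-Analysis.Analysis"
begin

definition besselJ_nat :: "nat \<Rightarrow> real \<Rightarrow> real" where
  "besselJ_nat n z = (\<Sum>k. (-1) ^ k / (fact k * fact (k + n)) * (z / 2) ^ (2 * k + n))"

definition besselJ :: "int \<Rightarrow> real \<Rightarrow> real" where
  "besselJ m z = (if 0 \<le> m then besselJ_nat (nat m) z
                  else (-1) ^ nat (- m) * besselJ_nat (nat (- m)) z)"

definition jfun :: "int \<Rightarrow> real \<Rightarrow> complex" where
  "jfun m x = 2 * complex_of_real pi * (\<i> powi m) * complex_of_real (besselJ m (4 * pi * x))"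

definition Jintegrand ::
  "nat \<Rightarrow> (nat \<Rightarrow> complex) \<Rightarrow> (nat \<Rightarrow> int) \<Rightarrow> real \<Rightarrow> int \<Rightarrow> (nat \<Rightarrow> real) \<Rightarrow> complex" where
  "Jintegrand d \<nu> mm x m y =
     jfun (mm (d + 1) + m) (x * (\<Prod>l\<in>{1..d}. y l)) *
     (\<Prod>l\<in>{1..d}. complex_of_real (y l) powr (2 * \<nu> l - 1) * jfun (mm l + m) (x / y l))"

end

theory Submission
  imports Defs
begin


definition bc :: "nat \<Rightarrow> nat \<Rightarrow> real" where
 "bc k n = (if k \<le> n \<and> even (n - k) then (-1)^((n-k) div 2) / (fact ((n-k) div 2) * fact ((n-k) div 2 + k) * 2^n) else 0)"

lemma bc_at: "bc k (2*j + k) = (-1)^j / (fact j * fact (j+k) * 2^(2*j+k))"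
  by (simp add: bc_def)

lemma fact_shift_ge: "fact k * real (k+1)^j \<le> fact (j+k)"
proof (induction j)
  case 0 then show ?case by simp
next
  case (Suc j)
  have "fact k * real (k+1)^Suc j = (fact k * real (k+1)^j) * real (k+1)" by simp
  also have "\<dots> \<le> fact (j+k) * real (Suc j + k)"
    by (intro mult_mono Suc) auto
  also have "\<dots> = fact (Suc j + k)" by (simp add: algebra_simps)
  finally show ?case .
qed

lemma bc_term_bound:
  assumes "s \<ge> 0"
  shows "\<bar>bc k (2*j+k)\<bar> * s^(2*j+k) \<le> (s/2)^k / fact k * ((s^2/(4*(k+1)))^j / fact j)"
proof -
  have "\<bar>bc k (2*j+k)\<bar> * s^(2*j+k) = s^(2*j+k) / (fact j * fact (j+k) * 2^(2*j+k))"
    by (simp add: bc_at abs_mult power_abs)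
  also have "\<dots> \<le> s^(2*j+k) / (fact j * (fact k * real (k+1)^j) * 2^(2*j+k))"
    using assms fact_shift_ge[of k j]
    by (intro divide_left_mono mult_right_mono mult_left_mono mult_pos_pos) auto
  also have "\<dots> = (s/2)^k / fact k * ((s^2/(4*(k+1)))^j / fact j)"
  proof -
    have a: "s^(2*j+k) = s^k * (s^2)^j" by (simp add: power_add power_mult)
    have b: "(2::real)^(2*j+k) = 2^k * 4^j" by (simp add: power_add power_mult)
    have c: "(4*real (k+1))^j = 4^j * (real k+1)^j" by (simp only: of_nat_add of_nat_1 power_mult_distrib)
    have d0: "4 + real k * 4 = (1 + real k) * 4" by simp
    have d: "(4 + real k * 4)^j = (1 + real k)^j * 4^j" unfolding d0 by (simp only: power_mult_distrib)
    show ?thesis unfolding a b power_divide by (simp add: field_simps d)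
  qed
  finally show ?thesis .
qed

lemma bc_zero: "n \<notin> range (\<lambda>j. 2*j+k) \<Longrightarrow> bc k n = 0"
proof -
  assume n: "n \<notin> range (\<lambda>j. 2*j+k)"
  show ?thesis
  proof (rule ccontr)
    assume "bc k n \<noteq> 0"
    then have "k \<le> n" "even (n-k)" by (auto simp: bc_def split: if_splits)
    then have "n = 2*((n-k) div 2) + k" by auto
    with n show False by blast
  qed
qed

lemma strict_mono_2jk: "strict_mono (\<lambda>j::nat. 2*j+k)"
  by (auto simp: strict_mono_def)

definition Ibound :: "nat \<Rightarrow> real \<Rightarrow> real" where
  "Ibound k s = (s/2)^k / fact k * exp (s^2/(4*(k+1)))"

lemma abs_series:
  assumes "s \<ge> 0"
  shows "summable (\<lambda>n. \<bar>bc k n\<bar> * s^n)" "(\<Sum>n. \<bar>bc k n\<bar> * s^n) \<le> Ibound k s"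
proof -
  let ?g = "\<lambda>j. (s/2)^k / fact k * ((s^2/(4*(k+1)))^j / fact j)"
  have ex: "(\<lambda>j. (s^2/(4*(k+1)))^j / fact j) sums exp (s^2/(4*(k+1)))"
    using exp_converges[of "s^2/(4*(k+1))"] by (simp add: divide_inverse mult.commute)
  have gs: "?g sums Ibound k s"
    unfolding Ibound_def by (intro sums_mult ex)
  have sm: "summable (\<lambda>j. \<bar>bc k (2*j+k)\<bar> * s^(2*j+k))"
    by (rule summable_comparison_test[OF _ sums_summable[OF gs]])
       (use bc_term_bound[OF assms] assms in auto)
  have le: "(\<Sum>j. \<bar>bc k (2*j+k)\<bar> * s^(2*j+k)) \<le> Ibound k s"
    using suminf_le[OF _ sm sums_summable[OF gs]] bc_term_bound[OF assms] sums_unique[OF gs] by auto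
  have eq: "(\<lambda>j. \<bar>bc k (2*j+k)\<bar> * s^(2*j+k)) sums c \<longleftrightarrow> (\<lambda>n. \<bar>bc k n\<bar> * s^n) sums c" for c
    using sums_mono_reindex[OF strict_mono_2jk[of k], of "\<lambda>n. \<bar>bc k n\<bar> * s^n"] bc_zero
    by auto
  from sm have s1: "(\<lambda>n. \<bar>bc k n\<bar> * s^n) sums (\<Sum>j. \<bar>bc k (2*j+k)\<bar> * s^(2*j+k))"
    using eq summable_sums by blast
  show "summable (\<lambda>n. \<bar>bc k n\<bar> * s^n)" using s1 sums_summable by blast
  show "(\<Sum>n. \<bar>bc k n\<bar> * s^n) \<le> Ibound k s" using s1 le sums_unique by metis
qed

lemma bc_summable: "summable (\<lambda>n. bc k n * t^n)"
proof -
  have "summable (\<lambda>n. \<bar>bc k n\<bar> * \<bar>t\<bar>^n)" using abs_series(1)[of "\<bar>t\<bar>" k] by simp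
  then show ?thesis
    by (rule summable_comparison_test[rotated]) (auto simp: abs_mult power_abs)
qed

lemma besselJ_nat_series: "besselJ_nat k t = (\<Sum>n. bc k n * t^n)"
proof -
  have "(\<lambda>j. bc k (2*j+k) * t^(2*j+k)) sums (\<Sum>n. bc k n * t^n)"
    using sums_mono_reindex[OF strict_mono_2jk[of k], of "\<lambda>n. bc k n * t^n"] bc_zero
      summable_sums[OF bc_summable] by auto
  moreover have "(\<lambda>j. bc k (2*j+k) * t^(2*j+k)) = (\<lambda>j. (-1) ^ j / (fact j * fact (j + k)) * (t / 2) ^ (2 * j + k))"
    by (auto simp: bc_at power_divide)
  ultimately show ?thesis unfolding besselJ_nat_def using sums_unique by metis
qed

lemma besselJ_nat_abs_le: "\<bar>besselJ_nat k t\<bar> \<le> (\<Sum>n. \<bar>bc k n\<bar> * \<bar>t\<bar>^n)"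
proof -
  have "\<bar>besselJ_nat k t\<bar> \<le> (\<Sum>n. \<bar>bc k n * t^n\<bar>)"
    unfolding besselJ_nat_series
    by (rule summable_rabs) (use abs_series(1)[of "\<bar>t\<bar>" k] in \<open>simp add: abs_mult power_abs\<close>)
  then show ?thesis by (simp add: abs_mult power_abs)
qed

lemma besselJ_nat_bound: "\<bar>besselJ_nat k t\<bar> \<le> Ibound k \<bar>t\<bar>"
  using besselJ_nat_abs_le[of k t] abs_series(2)[of "\<bar>t\<bar>" k] by simp


lemma euler_op:
  fixes a :: "nat \<Rightarrow> real"
  assumes sa: "\<And>t. summable (\<lambda>n. a n * t^n)"
  shows "((\<lambda>t. \<Sum>n. a n * t^n) has_real_derivative (\<Sum>n. diffs a n * t^n)) (at t)"
    and "summable (\<lambda>n. (real n * a n) * t^n)"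
    and "t * (\<Sum>n. diffs a n * t^n) = (\<Sum>n. (real n * a n) * t^n)"
proof -
  show "((\<lambda>t. \<Sum>n. a n * t^n) has_real_derivative (\<Sum>n. diffs a n * t^n)) (at t)"
    by (rule termdiffs_strong_converges_everywhere[OF sa])
  have sd: "summable (\<lambda>n. diffs a n * t^n)" by (rule termdiff_converges_all[OF sa])
  let ?h = "\<lambda>n. (real n * a n) * t^n"
  have hs: "(\<lambda>n. ?h (Suc n)) = (\<lambda>n. (diffs a n * t^n) * t)"
    by (auto simp: diffs_def)
  have s1: "summable (\<lambda>n. ?h (Suc n))" unfolding hs by (intro summable_mult2 sd)
  then show s2: "summable ?h" using summable_Suc_iff[of ?h] by blast
  have "(\<Sum>n. ?h (Suc n)) = (\<Sum>n. ?h n) - ?h 0"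
    by (rule suminf_split_head[OF s2])
  then have "(\<Sum>n. ?h n) = (\<Sum>n. ?h (Suc n)) + ?h 0" by simp
  also have "\<dots> = (\<Sum>n. (diffs a n * t^n) * t)" unfolding hs by simp
  also have "\<dots> = t * (\<Sum>n. diffs a n * t^n)"
    by (subst suminf_mult2[OF sd, symmetric]) simp
  finally show "t * (\<Sum>n. diffs a n * t^n) = (\<Sum>n. (real n * a n) * t^n)" by simp
qed

definition bc1 :: "nat \<Rightarrow> nat \<Rightarrow> real" where "bc1 k n = real n * bc k n"
definition Pk :: "nat \<Rightarrow> real \<Rightarrow> real" where "Pk k t = (\<Sum>n. bc1 k n * t^n)"

lemma bc1_summable: "summable (\<lambda>n. bc1 k n * t^n)"
  unfolding bc1_def using euler_op(2)[OF bc_summable] by blast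

lemma J_deriv:
  assumes "t \<noteq> 0"
  shows "(besselJ_nat k has_real_derivative Pk k t / t) (at t)"
proof -
  have e: "besselJ_nat k = (\<lambda>t. \<Sum>n. bc k n * t^n)" using besselJ_nat_series by auto
  show ?thesis unfolding e Pk_def bc1_def
    using euler_op(1,3)[OF bc_summable[of k], where t=t] assms
    by (metis (no_types, lifting) nonzero_mult_div_cancel_left)
qed

lemma coef_shift: "(real (n+2)^2 - real k^2) * bc k (n+2) = - bc k n"
proof (cases "n+2 \<in> range (\<lambda>j. 2*j+k)")
  case False
  then have z: "bc k (n+2) = 0" by (rule bc_zero)
  have "n \<notin> range (\<lambda>j. 2*j+k)"
  proof
    assume "n \<in> range (\<lambda>j. 2*j+k)"
    then obtain j where "n = 2*j+k" by auto
    then have "n+2 = 2*(Suc j)+k" by simp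
    with False show False by blast
  qed
  then show ?thesis using z bc_zero by simp
next
  case True
  then obtain j' where j': "n+2 = 2*j'+k" by auto
  show ?thesis
  proof (cases j')
    case 0
    then have "k = n+2" using j' by simp
    moreover have "bc k n = 0" using \<open>k = n+2\<close> by (simp add: bc_def)
    ultimately show ?thesis by simp
  next
    case (Suc j)
    then have n: "n = 2*j+k" using j' by simp
    have "bc k (n+2) = bc k (2*(Suc j)+k)" using n by (simp add: algebra_simps)
    also have "\<dots> = (-1)^Suc j / (fact (Suc j) * fact (Suc j+k) * 2^(2*Suc j+k))" by (rule bc_at)
    finally have b2: "bc k (n+2) = (-1)^Suc j / (fact (Suc j) * fact (Suc j+k) * 2^(2*Suc j+k))" .
    have b0: "bc k n = (-1)^j / (fact j * fact (j+k) * 2^(2*j+k))" using n bc_at by simp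
    have fa: "fact (Suc j + k) = real (Suc j + k) * fact (j+k)" by simp
    have pw: "(2::real)^(2*Suc j+k) = 4 * 2^(2*j+k)" by (simp add: power_add)
    have sq: "real (n+2)^2 - real k^2 = 4 * real (Suc j) * real (Suc j + k)"
      using n by (simp add: power2_eq_square algebra_simps)
    have gen: "\<And>a b A B C sg. a > 0 \<Longrightarrow> b > 0 \<Longrightarrow> A > 0 \<Longrightarrow> B > 0 \<Longrightarrow> C > 0 \<Longrightarrow>
        4*a*b * (- sg / (a*A * (b*B) * (4*C))) = - (sg / (A*B*(C::real)))"
      by (simp add: field_simps)
    show ?thesis unfolding b2 b0 sq fa pw fact_Suc power_Suc
      using gen[of "real (Suc j)" "real (Suc j + k)" "fact j" "fact (j+k)" "2^(2*j+k)" "(-1)^j"]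
      by (simp add: algebra_simps)
  qed
qed

lemma coef_01: assumes "n < 2" shows "(real n^2 - real k^2) * bc k n = 0"
proof -
  have "n = 0 \<or> n = 1" using assms by auto
  then show ?thesis
  proof
    assume "n = 0" then show ?thesis by (auto simp: bc_def)
  next
    assume "n = 1" then show ?thesis by (cases k) (auto simp: bc_def)
  qed
qed

lemma bessel_ode:
  "(\<Sum>n. (real n * bc1 k n) * t^n) = (real k^2 - t^2) * besselJ_nat k t"
proof -
  let ?c = "\<lambda>n. (real n^2 - real k^2) * bc k n * t^n"
  have s0: "(\<lambda>n. bc k n * t^n) sums besselJ_nat k t"
    using besselJ_nat_series summable_sums[OF bc_summable] by metis
  have eqc: "(\<lambda>n. ?c (n+2)) = (\<lambda>n. (-(t^2)) * (bc k n * t^n))"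
  proof (rule ext)
    fix n
    show "?c (n+2) = (-(t^2)) * (bc k n * t^n)"
    proof -
      have e: "((real (n+2))^2 - (real k)^2) * bc k (n+2) = - bc k n" by (rule coef_shift)
      have "?c (n+2) = (((real (n+2))^2 - (real k)^2) * bc k (n+2)) * t^(n+2)" by simp
      then have "?c (n+2) = (- bc k n) * t^(n+2)" by (simp only: e)
      then show ?thesis by (simp add: power_add power2_eq_square algebra_simps)
    qed
  qed
  have "(\<lambda>n. ?c (n+2)) sums ((-(t^2)) * besselJ_nat k t)"
    unfolding eqc by (rule sums_mult[OF s0])
  then have sc: "?c sums ((-(t^2)) * besselJ_nat k t)"
  proof -
    have z0: "?c 0 = 0" using coef_01[of 0 k] by simp
    have z1: "?c 1 = 0" using coef_01[of 1 k] by simp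
    have "(\<Sum>i<2. ?c i) = ?c 0 + ?c 1" by (simp add: numeral_2_eq_2)
    also have "\<dots> = 0" unfolding z0 z1 by simp
    finally have "(\<Sum>i<2. ?c i) = 0" .
    then show ?thesis using sums_iff_shift[of ?c 2] \<open>(\<lambda>n. ?c (n+2)) sums _\<close> by simp
  qed
  have s1: "(\<lambda>n. (real k)^2 * (bc k n * t^n)) sums ((real k)^2 * besselJ_nat k t)"
    by (rule sums_mult[OF s0])
  have "(\<lambda>n. ?c n + (real k)^2 * (bc k n * t^n)) sums ((-(t^2)) * besselJ_nat k t + (real k)^2 * besselJ_nat k t)"
    by (rule sums_add[OF sc s1])
  moreover have "(\<lambda>n. ?c n + (real k)^2 * (bc k n * t^n)) = (\<lambda>n. (real n * bc1 k n) * t^n)"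
    by (auto simp: bc1_def power2_eq_square algebra_simps)
  ultimately show ?thesis by (simp add: sums_iff algebra_simps)
qed

lemma bc1_summable_all: "summable (\<lambda>n. bc1 k n * t^n)" by (rule bc1_summable)

lemma P_deriv:
  assumes "t \<noteq> 0"
  shows "(Pk k has_real_derivative (real k^2 - t^2) * besselJ_nat k t / t) (at t)"
proof -
  have d: "(Pk k has_real_derivative (\<Sum>n. diffs (bc1 k) n * t^n)) (at t)"
    unfolding Pk_def[abs_def] using euler_op(1)[OF bc1_summable_all] by blast
  have "t * (\<Sum>n. diffs (bc1 k) n * t^n) = (real k^2 - t^2) * besselJ_nat k t"
    using euler_op(3)[OF bc1_summable_all[of k], where t=t] bessel_ode by simp
  then have "(\<Sum>n. diffs (bc1 k) n * t^n) = (real k^2 - t^2) * besselJ_nat k t / t"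
    using assms by (simp add: field_simps)
  then show ?thesis using d by simp
qed


lemma J_deriv_all: "\<exists>D. (besselJ_nat k has_real_derivative D) (at t)"
proof -
  have e: "besselJ_nat k = (\<lambda>t. \<Sum>n. bc k n * t^n)" using besselJ_nat_series by auto
  show ?thesis unfolding e using euler_op(1)[OF bc_summable[of k], where t=t] by blast
qed

lemma P_deriv_all: "\<exists>D. (Pk k has_real_derivative D) (at t)"
  unfolding Pk_def[abs_def] using euler_op(1)[OF bc1_summable_all[of k], where t=t] by blast

lemma J_cont [continuous_intros]: "continuous_on S (besselJ_nat k)"
  by (meson DERIV_isCont J_deriv_all continuous_at_imp_continuous_on)

lemma P_cont [continuous_intros]: "continuous_on S (Pk k)"
  by (meson DERIV_isCont P_deriv_all continuous_at_imp_continuous_on)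

definition dd :: "nat \<Rightarrow> real \<Rightarrow> real" where "dd k s = s^2 - real k^2 + 1/4"

lemma dd_deriv: "(dd k has_real_derivative 2*t) (at t)"
  unfolding dd_def[abs_def] by (auto intro!: derivative_eq_intros)

lemma energy1_deriv:
  assumes t: "t > 0" and D: "dd k t > 0"
  shows "((\<lambda>s. s * besselJ_nat k s^2 + s * (Pk k s + besselJ_nat k s/2)^2 / dd k s)
          has_real_derivative
          (2 * (Pk k t + besselJ_nat k t/2)^2 * (1/4 - real k^2) / (dd k t)^2)) (at t)"
proof -
  have dJ: "(besselJ_nat k has_real_derivative Pk k t / t) (at t)" using J_deriv t by simp
  have dP: "(Pk k has_real_derivative (real k^2 - t^2) * besselJ_nat k t / t) (at t)" using P_deriv t by simp
  show ?thesis
    apply (rule derivative_eq_intros dJ dP dd_deriv refl | use t D in force)+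
    using t D apply (simp add: field_simps)
    unfolding dd_def apply (simp add: algebra_simps power2_eq_square)
    done
qed

lemma energy0_deriv:
  assumes t: "t > 0"
  shows "((\<lambda>s. (dd k s * besselJ_nat k s^2 + (Pk k s + besselJ_nat k s/2)^2) / s)
          has_real_derivative
          ((2 * real k^2 - 1/2) * besselJ_nat k t^2 / t^2)) (at t)"
proof -
  have dJ: "(besselJ_nat k has_real_derivative Pk k t / t) (at t)" using J_deriv t by simp
  have dP: "(Pk k has_real_derivative (real k^2 - t^2) * besselJ_nat k t / t) (at t)" using P_deriv t by simp
  show ?thesis
    apply (rule derivative_eq_intros dJ dP dd_deriv refl | use t in force)+
    using t apply (simp add: field_simps)
    unfolding dd_def apply (simp add: algebra_simps power2_eq_square eval_nat_numeral)
    done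
qed

lemma dd_cont [continuous_intros]: "continuous_on S (dd k)"
  unfolding dd_def[abs_def] by (intro continuous_intros)

lemma decr_lemma:
  fixes f f' :: "real \<Rightarrow> real"
  assumes "a \<le> b" "\<And>s. a < s \<Longrightarrow> s < b \<Longrightarrow> (f has_real_derivative f' s) (at s) \<and> f' s \<le> 0"
    and "continuous_on {a..b} f"
  shows "f b \<le> f a"
  using DERIV_nonpos_imp_decreasing_open[of a b f] assms by blast

lemma dd_pos: "real k \<le> s \<Longrightarrow> dd k s > 0"
proof -
  assume "real k \<le> s"
  then have "real k^2 \<le> s^2" by (intro power_mono) auto
  then show ?thesis by (simp add: dd_def)
qed

definition E1 :: "nat \<Rightarrow> real \<Rightarrow> real" where
  "E1 k s = s * besselJ_nat k s^2 + s * (Pk k s + besselJ_nat k s/2)^2 / dd k s"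
definition E0 :: "nat \<Rightarrow> real \<Rightarrow> real" where
  "E0 k s = (dd k s * besselJ_nat k s^2 + (Pk k s + besselJ_nat k s/2)^2) / s"

lemma decay_k1:
  assumes k: "k \<ge> 1" and t: "real k + 1 \<le> t"
  shows "t * besselJ_nat k t^2 \<le> E1 k (real k + 1)"
proof -
  have "t * besselJ_nat k t^2 \<le> E1 k t"
    unfolding E1_def using dd_pos[of k t] t by (intro add_increasing2) auto
  also have "E1 k t \<le> E1 k (real k + 1)"
  proof (rule decr_lemma[OF t, where f' = "\<lambda>t. 2 * (Pk k t + besselJ_nat k t/2)^2 * (1/4 - real k^2) / (dd k t)^2"])
    fix s assume s: "real k + 1 < s" "s < t"
    have dp: "dd k s > 0" using s by (intro dd_pos) auto
    have "real k^2 \<ge> 1" using k by simp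
    then have "2 * (Pk k s + besselJ_nat k s/2)^2 * (1/4 - real k^2) / (dd k s)^2 \<le> 0"
      by (intro divide_nonpos_nonneg mult_nonneg_nonpos) auto
    then show "(E1 k has_real_derivative 2 * (Pk k s + besselJ_nat k s/2)^2 * (1/4 - real k^2) / (dd k s)^2) (at s)
       \<and> 2 * (Pk k s + besselJ_nat k s/2)^2 * (1/4 - real k^2) / (dd k s)^2 \<le> 0"
      using energy1_deriv[of s k] dp s unfolding E1_def[abs_def] by auto
  next
    have "\<forall>s\<in>{real k + 1..t}. dd k s \<noteq> 0"
    proof
      fix s assume "s \<in> {real k + 1..t}"
      then have "real k \<le> s" by auto
      then show "dd k s \<noteq> 0" using dd_pos[of k s] by simp
    qed
    then show "continuous_on {real k + 1..t} (E1 k)"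
      unfolding E1_def[abs_def] by (intro continuous_intros) auto
  qed
  finally show ?thesis .
qed

lemma decay_k0:
  assumes t: "1 \<le> t"
  shows "t * besselJ_nat 0 t^2 \<le> E0 0 1"
proof -
  have "t * besselJ_nat 0 t^2 \<le> E0 0 t"
  proof -
    have "t * besselJ_nat 0 t^2 = (t^2 * besselJ_nat 0 t^2) / t" using t by (simp add: power2_eq_square)
    also have "\<dots> \<le> E0 0 t" unfolding E0_def using t
      by (intro divide_right_mono add_increasing2 mult_right_mono) (auto simp: dd_def)
    finally show ?thesis .
  qed
  also have "E0 0 t \<le> E0 0 1"
  proof (rule decr_lemma[OF t, where f' = "\<lambda>t. (2 * real 0^2 - 1/2) * besselJ_nat 0 t^2 / t^2"])
    fix s assume s: "1 < s" "s < t"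
    have "(2 * real 0^2 - 1/2) * besselJ_nat 0 s^2 / s^2 \<le> 0"
      by (intro divide_nonpos_nonneg mult_nonpos_nonneg) auto
    then show "(E0 0 has_real_derivative (2 * real 0^2 - 1/2) * besselJ_nat 0 s^2 / s^2) (at s)
       \<and> (2 * real 0^2 - 1/2) * besselJ_nat 0 s^2 / s^2 \<le> 0"
      using energy0_deriv[of s 0] s unfolding E0_def[abs_def] by auto
  next
    show "continuous_on {1..t} (E0 0)"
      unfolding E0_def[abs_def] by (intro continuous_intros) auto
  qed
  finally show ?thesis .
qed


lemma Ib_nonneg: "s \<ge> 0 \<Longrightarrow> Ibound k s \<ge> 0"
  unfolding Ibound_def by simp

lemma Ib_mono:
  assumes "0 \<le> s" "s \<le> s'"
  shows "Ibound k s \<le> Ibound k s'"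
proof -
  have "(s/2)^k \<le> (s'/2)^k" using assms by (intro power_mono) auto
  moreover have "exp (s^2/(4*(k+1))) \<le> exp (s'^2/(4*(k+1)))"
    using assms by (auto intro!: divide_right_mono power_mono)
  ultimately show ?thesis unfolding Ibound_def using assms
    by (intro mult_mono divide_right_mono) auto
qed

lemma P_bound: "\<bar>Pk k t\<bar> \<le> Ibound k (2*\<bar>t\<bar>)"
proof -
  have sA: "summable (\<lambda>n. \<bar>bc k n\<bar> * (2*\<bar>t\<bar>)^n)" by (rule abs_series(1)) simp
  have le: "\<bar>bc1 k n * t^n\<bar> \<le> \<bar>bc k n\<bar> * (2*\<bar>t\<bar>)^n" for n
  proof -
    have a: "n \<le> 2^n" using less_exp[of n] by simp
    have "real n \<le> real (2^n)" using a by (simp only: of_nat_le_iff)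
    then have "real n \<le> 2^n" by simp
    then have "real n * (\<bar>bc k n\<bar> * \<bar>t\<bar>^n) \<le> 2^n * (\<bar>bc k n\<bar> * \<bar>t\<bar>^n)"
      by (intro mult_right_mono) auto
    then show ?thesis by (simp add: bc1_def abs_mult power_abs power_mult_distrib algebra_simps)
  qed
  have s1: "summable (\<lambda>n. \<bar>bc1 k n * t^n\<bar>)"
    by (rule summable_comparison_test[OF _ sA]) (use le in auto)
  have "\<bar>Pk k t\<bar> \<le> (\<Sum>n. \<bar>bc1 k n * t^n\<bar>)" unfolding Pk_def by (rule summable_rabs[OF s1])
  also have "\<dots> \<le> (\<Sum>n. \<bar>bc k n\<bar> * (2*\<bar>t\<bar>)^n)" by (rule suminf_le[OF le s1 sA])
  also have "\<dots> \<le> Ibound k (2*\<bar>t\<bar>)" by (rule abs_series(2)) simp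
  finally show ?thesis .
qed

definition Mk :: "nat \<Rightarrow> real" where "Mk k = Ibound k (2*(real k+1))"
definition Ak :: "nat \<Rightarrow> real" where "Ak k = 3 * sqrt (real k+1) * Mk k + Mk k"

lemma Mk_nonneg: "Mk k \<ge> 0" unfolding Mk_def by (rule Ib_nonneg) simp

lemma J_t0_bound: "\<bar>besselJ_nat k t\<bar> \<le> Mk k" if "0 \<le> t" "t \<le> real k + 1"
proof -
  have "\<bar>besselJ_nat k t\<bar> \<le> Ibound k t" using besselJ_nat_bound[of k t] that by simp
  also have "\<dots> \<le> Mk k" unfolding Mk_def using that by (intro Ib_mono) auto
  finally show ?thesis .
qed

lemma P_t0_bound: "\<bar>Pk k (real k + 1)\<bar> \<le> Mk k"
  using P_bound[of k "real k + 1"] unfolding Mk_def by simp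

lemma R_t0_bound: "(Pk k (real k + 1) + besselJ_nat k (real k + 1)/2)^2 \<le> 4 * Mk k^2"
proof -
  have a: "\<bar>Pk k (real k + 1) + besselJ_nat k (real k + 1)/2\<bar> \<le> 2 * Mk k"
    using P_t0_bound[of k] J_t0_bound[of "real k + 1" k] Mk_nonneg[of k] by linarith
  have "(Pk k (real k + 1) + besselJ_nat k (real k + 1)/2)^2 = \<bar>Pk k (real k + 1) + besselJ_nat k (real k + 1)/2\<bar>^2"
    by simp
  also have "\<dots> \<le> (2 * Mk k)^2" by (rule power_mono[OF a]) simp
  finally show ?thesis by (simp add: power_mult_distrib)
qed

lemma tail_bound:
  assumes t: "real k + 1 \<le> t"
  shows "t * besselJ_nat k t^2 \<le> 6 * (real k + 1) * Mk k^2"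
proof -
  have J2a: "\<bar>besselJ_nat k (real k + 1)\<bar>^2 \<le> Mk k^2"
    by (rule power_mono[OF J_t0_bound]) auto
  have J2: "besselJ_nat k (real k + 1)^2 \<le> Mk k^2" using J2a by simp
  show ?thesis
  proof (cases "k \<ge> 1")
    case True
    have ddge: "dd k (real k + 1) \<ge> 1" unfolding dd_def by (simp add: power2_eq_square algebra_simps)
    have "t * besselJ_nat k t^2 \<le> E1 k (real k + 1)" by (rule decay_k1[OF True t])
    also have "\<dots> \<le> (real k + 1) * Mk k^2 + (real k + 1) * (4 * Mk k^2) / 1"
      unfolding E1_def
    proof (intro add_mono mult_left_mono frac_le)
      show "(Pk k (real k + 1) + besselJ_nat k (real k + 1) / 2)^2 \<le> 4 * Mk k^2" by (rule R_t0_bound)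
    qed (use J2 ddge in auto)
    also have "\<dots> \<le> 6 * (real k + 1) * Mk k^2"
    proof -
      have h1: "0 \<le> real k * Mk k^2" "0 \<le> Mk k^2" by simp_all
      then show ?thesis by (simp add: algebra_simps)
    qed
    finally show ?thesis .
  next
    case False
    then have k0: "k = 0" by simp
    have "t * besselJ_nat k t^2 \<le> E0 0 1" using decay_k0[of t] t k0 by simp
    also have "\<dots> = (5/4) * besselJ_nat 0 1^2 + (Pk 0 1 + besselJ_nat 0 1/2)^2"
      unfolding E0_def dd_def by simp
    also have "\<dots> \<le> (5/4) * Mk k^2 + 4 * Mk k^2"
      using J2 R_t0_bound[of k] k0 by (intro add_mono) auto
    also have "\<dots> \<le> 6 * (real k + 1) * Mk k^2" using k0 by simp
    finally show ?thesis .
  qed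
qed

lemma J_main_bound:
  assumes t: "t \<ge> 0"
  shows "\<bar>besselJ_nat k t\<bar> \<le> Ak k" "sqrt t * \<bar>besselJ_nat k t\<bar> \<le> Ak k"
proof -
  have M: "Mk k \<ge> 0" by (rule Mk_nonneg)
  have sq1: "sqrt (real k + 1) \<ge> 1" by simp
  have "\<bar>besselJ_nat k t\<bar> \<le> Ak k \<and> sqrt t * \<bar>besselJ_nat k t\<bar> \<le> Ak k"
  proof (cases "t \<le> real k + 1")
    case True
    have J: "\<bar>besselJ_nat k t\<bar> \<le> Mk k" by (rule J_t0_bound[OF t True])
    have "sqrt t * \<bar>besselJ_nat k t\<bar> \<le> sqrt (real k + 1) * Mk k"
      using True t J by (intro mult_mono) auto
    also have "\<dots> \<le> Ak k" unfolding Ak_def using M sq1 by (simp add: algebra_simps)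
    finally show ?thesis using J M sq1 unfolding Ak_def by (auto intro: order_trans[OF J])
  next
    case False
    then have t0: "real k + 1 \<le> t" by simp
    have "(sqrt t * \<bar>besselJ_nat k t\<bar>)^2 = t * besselJ_nat k t^2" using t by (simp add: power_mult_distrib)
    also have "\<dots> \<le> 6 * (real k + 1) * Mk k^2" by (rule tail_bound[OF t0])
    also have "\<dots> \<le> (3 * sqrt (real k + 1) * Mk k)^2"
    proof -
      have h1: "0 \<le> real k * Mk k^2" "0 \<le> Mk k^2" by simp_all
      then show ?thesis by (simp add: power_mult_distrib algebra_simps)
    qed
    finally have "sqrt t * \<bar>besselJ_nat k t\<bar> \<le> 3 * sqrt (real k + 1) * Mk k"
      by (rule power2_le_imp_le) (use M in auto)
    also have "\<dots> \<le> Ak k" unfolding Ak_def using M by simp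
    finally have b2: "sqrt t * \<bar>besselJ_nat k t\<bar> \<le> Ak k" .
    have "sqrt t \<ge> 1" using t0 by simp
    then have "1 * \<bar>besselJ_nat k t\<bar> \<le> sqrt t * \<bar>besselJ_nat k t\<bar>"
      by (intro mult_right_mono) auto
    then have "\<bar>besselJ_nat k t\<bar> \<le> sqrt t * \<bar>besselJ_nat k t\<bar>" by simp
    then show ?thesis using b2 by linarith
  qed
  then show "\<bar>besselJ_nat k t\<bar> \<le> Ak k" "sqrt t * \<bar>besselJ_nat k t\<bar> \<le> Ak k" by auto
qed

lemma pow_fact_le_exp: "x \<ge> 0 \<Longrightarrow> x^n / fact n \<le> exp (x::real)"
proof -
  assume x: "x \<ge> 0"
  have s: "(\<lambda>i. x^i / fact i) sums exp x"
    using exp_converges[of x] by (simp add: divide_inverse mult.commute)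
  have "sum (\<lambda>i. x^i / fact i) {n} \<le> suminf (\<lambda>i. x^i / fact i)"
    by (rule sum_le_suminf[OF sums_summable[OF s]]) (use x in auto)
  then show ?thesis using sums_unique[OF s] by simp
qed

lemma Ak_growth: "Ak k \<le> 4 * exp 2 * exp 3 ^ k"
proof -
  have "(real k + 1)^(Suc k) / fact (Suc k) = ((real k + 1) * (real k + 1)^k) / ((real k + 1) * fact k)"
    by (simp add: algebra_simps)
  also have "\<dots> = (real k + 1)^k / fact k" by (rule mult_divide_mult_cancel_left) simp
  finally have "(real k + 1)^k / fact k = (real k + 1)^(Suc k) / fact (Suc k)" by simp
  also have "\<dots> \<le> exp (real k + 1)" by (rule pow_fact_le_exp) simp
  finally have a: "(real k + 1)^k / fact k \<le> exp (real k + 1)" .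
  have e1: "2*(real k+1)/2 = real k + 1" by simp
  have e2: "(2*(real k+1))^2/(4*(k+1)) = real k + 1" by (simp add: power2_eq_square field_simps)
  have "Mk k = (real k + 1)^k / fact k * exp (real k + 1)"
    unfolding Mk_def Ibound_def e1 e2 by simp
  also have "\<dots> \<le> exp (real k + 1) * exp (real k + 1)"
    by (intro mult_right_mono a) simp
  finally have M: "Mk k \<le> exp (2 * real k + 2)" by (simp add: exp_add[symmetric] algebra_simps)
  have sq: "sqrt (real k + 1) \<le> exp (real k)"
  proof -
    have s1: "1 \<le> sqrt (real k + 1)" by simp
    have "sqrt (real k + 1) = 1 * sqrt (real k + 1)" by simp
    also have "\<dots> \<le> sqrt (real k + 1) * sqrt (real k + 1)" by (rule mult_right_mono[OF s1]) simp
    also have "\<dots> = real k + 1" by simp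
    also have "\<dots> \<le> exp (real k)" using exp_ge_add_one_self[of "real k"] by (simp only: add.commute)
    finally show ?thesis .
  qed
  have "Ak k = (3 * sqrt (real k + 1) + 1) * Mk k" unfolding Ak_def by (simp add: algebra_simps)
  also have "\<dots> \<le> (4 * exp (real k)) * exp (2 * real k + 2)"
  proof (intro mult_mono M)
    have "1 \<le> exp (real k)" by simp
    then show "3 * sqrt (real k + 1) + 1 \<le> 4 * exp (real k)" using sq by linarith
  qed (use Mk_nonneg in auto)
  also have "\<dots> = 4 * exp 2 * exp (3 * real k)" by (simp add: exp_add[symmetric] algebra_simps)
  also have "\<dots> = 4 * exp 2 * exp 3 ^ k" by (simp add: exp_of_nat_mult[symmetric] mult.commute)
  finally show ?thesis .
qed

definition epsk :: "real \<Rightarrow> nat \<Rightarrow> real" where "epsk X k = (X/2)^k / fact k * exp (X^2/4)"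

lemma J_small:
  assumes "0 \<le> t" "t \<le> X"
  shows "\<bar>besselJ_nat k t\<bar> \<le> epsk X k"
proof -
  have "\<bar>besselJ_nat k t\<bar> \<le> Ibound k t" using besselJ_nat_bound[of k t] assms by simp
  also have "\<dots> \<le> Ibound k X" using assms by (intro Ib_mono) auto
  also have "\<dots> \<le> epsk X k"
  proof -
    have "X^2/(4*(k+1)) \<le> X^2/4" by (rule divide_left_mono) auto
    then show ?thesis unfolding Ibound_def epsk_def using assms
      by (intro mult_left_mono) auto
  qed
  finally show ?thesis .
qed


lemma summable_on_finsum:
  fixes f :: "'i \<Rightarrow> 'a \<Rightarrow> real"
  assumes "finite I" "\<And>i. i \<in> I \<Longrightarrow> f i summable_on A"
  shows "(\<lambda>x. \<Sum>i\<in>I. f i x) summable_on A"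
  using assms
proof (induction I rule: finite_induct)
  case empty then show ?case by simp
next
  case (insert i I)
  then show ?case by (simp add: summable_on_add)
qed

lemma int_abs_summable:
  fixes F :: "nat \<Rightarrow> real"
  assumes nn: "\<And>n. F n \<ge> 0" and s: "summable F"
  shows "(\<lambda>m::int. F (nat \<bar>m + c\<bar>)) summable_on UNIV"
proof -
  have FU: "F summable_on UNIV" by (rule norm_summable_imp_summable_on) (use s nn in simp)
  have s2: "summable (\<lambda>n. F (Suc n))" using s summable_Suc_iff by blast
  have FU2: "(\<lambda>n. F (Suc n)) summable_on UNIV"
    by (rule norm_summable_imp_summable_on) (use s2 nn in simp)
  let ?G = "\<lambda>z::int. F (nat \<bar>z\<bar>)"
  have i1: "inj_on int UNIV" by (simp add: inj_on_def)
  have c1: "(?G \<circ> int) = F" by (simp add: o_def)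
  have A: "?G summable_on (int ` UNIV)"
    using summable_on_reindex[OF i1, of ?G] c1 FU by simp
  have i2: "inj_on (\<lambda>n. - int (Suc n)) UNIV" by (simp add: inj_on_def)
  have c2: "(?G \<circ> (\<lambda>n. - int (Suc n))) = (\<lambda>n. F (Suc n))"
  proof
    fix n
    have "nat \<bar>- int (Suc n)\<bar> = Suc n" by simp
    then show "(?G \<circ> (\<lambda>n. - int (Suc n))) n = F (Suc n)" by (simp only: o_def)
  qed
  have B: "?G summable_on ((\<lambda>n. - int (Suc n)) ` UNIV)"
    using summable_on_reindex[OF i2, of ?G] c2 FU2 by simp
  have U: "UNIV = int ` UNIV \<union> (\<lambda>n. - int (Suc n)) ` UNIV"
  proof -
    have "z \<in> int ` UNIV \<union> (\<lambda>n. - int (Suc n)) ` UNIV" for z :: int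
    proof (cases "z \<ge> 0")
      case True
      then have "z = int (nat z)" by simp
      then have "z \<in> int ` UNIV" by (rule image_eqI) simp
      then show ?thesis by blast
    next
      case False
      then have "z = - int (Suc (nat (- z - 1)))" by simp
      then show ?thesis by blast
    qed
    then show ?thesis by blast
  qed
  have "?G summable_on UNIV"
    unfolding U by (rule summable_on_Un_disjoint[OF A B]) auto
  moreover have "bij_betw (\<lambda>m. m + c) UNIV (UNIV::int set)"
    by (rule bij_betwI[where g = "\<lambda>m. m - c"]) auto
  ultimately show ?thesis using summable_on_reindex_bij_betw[of "\<lambda>m. m + c" UNIV UNIV ?G] by simp
qed

lemma exp_sums_real: "(\<lambda>n. x^n / fact n) sums exp (x::real)"
  using exp_converges[of x] by (simp add: divide_inverse mult.commute)

lemma summable_eps_pow: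
  assumes R: "R \<ge> 0" and X: "X \<ge> 0"
  shows "summable (\<lambda>n. R^n * epsk X n)"
proof -
  have "(\<lambda>n. (R*X/2)^n / fact n) sums exp (R*X/2)"
    by (rule exp_sums_real)
  then have "summable (\<lambda>n. exp (X^2/4) * ((R*X/2)^n / fact n))"
    by (intro summable_mult sums_summable) auto
  moreover have "(\<lambda>n. exp (X^2/4) * ((R*X/2)^n / fact n)) = (\<lambda>n. R^n * epsk X n)"
  proof
    fix n
    have "(R*X/2)^n = R^n * (X/2)^n" by (simp add: power_mult_distrib[symmetric])
    then show "exp (X^2/4) * ((R*X/2)^n / fact n) = R^n * epsk X n"
      unfolding epsk_def by simp
  qed
  ultimately show ?thesis by simp
qed

lemma epsk_nonneg: "X \<ge> 0 \<Longrightarrow> epsk X n \<ge> 0" by (simp add: epsk_def)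

lemma sum_eps:
  assumes R: "R \<ge> 1" and X: "X \<ge> 0"
  shows "(\<lambda>m::int. R ^ nat \<bar>m\<bar> * epsk X (nat \<bar>m + c\<bar>)) summable_on UNIV"
proof -
  let ?F = "\<lambda>n. R^n * epsk X n"
  have F: "(\<lambda>m::int. ?F (nat \<bar>m + c\<bar>)) summable_on UNIV"
    by (rule int_abs_summable) (use R X summable_eps_pow epsk_nonneg in auto)
  then have F2: "(\<lambda>m::int. R ^ nat \<bar>c\<bar> * ?F (nat \<bar>m + c\<bar>)) summable_on UNIV"
    by (rule summable_on_cmult_right)
  show ?thesis
  proof (rule summable_on_comparison_test[OF F2])
    fix m :: int
    have t1: "\<bar>m\<bar> \<le> \<bar>c\<bar> + \<bar>m + c\<bar>" using abs_triangle_ineq4[of "m + c" c] by simp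
    have "nat \<bar>m\<bar> \<le> nat (\<bar>c\<bar> + \<bar>m + c\<bar>)" using t1 by (rule nat_mono)
    also have "\<dots> = nat \<bar>c\<bar> + nat \<bar>m + c\<bar>" by (rule nat_add_distrib) auto
    finally have "nat \<bar>m\<bar> \<le> nat \<bar>c\<bar> + nat \<bar>m + c\<bar>" .
    then have "R ^ nat \<bar>m\<bar> \<le> R ^ (nat \<bar>c\<bar> + nat \<bar>m + c\<bar>)" by (rule power_increasing) (use R in auto)
    then have "R ^ nat \<bar>m\<bar> * epsk X (nat \<bar>m + c\<bar>) \<le> R ^ (nat \<bar>c\<bar> + nat \<bar>m + c\<bar>) * epsk X (nat \<bar>m + c\<bar>)"
      by (rule mult_right_mono) (use X epsk_nonneg in auto)
    then show "R ^ nat \<bar>m\<bar> * epsk X (nat \<bar>m + c\<bar>) \<le> R ^ nat \<bar>c\<bar> * ?F (nat \<bar>m + c\<bar>)"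
      by (simp add: power_add algebra_simps)
    show "0 \<le> R ^ nat \<bar>m\<bar> * epsk X (nat \<bar>m + c\<bar>)" using R X epsk_nonneg by simp
  qed
qed


lemma besselJ_abs: "\<bar>besselJ m t\<bar> = \<bar>besselJ_nat (nat \<bar>m\<bar>) t\<bar>"
  by (simp add: besselJ_def abs_mult power_abs)

lemma Ak_nonneg: "Ak k \<ge> 0"
  unfolding Ak_def using Mk_nonneg[of k] by simp

lemma BJ_A: "t \<ge> 0 \<Longrightarrow> \<bar>besselJ m t\<bar> \<le> Ak (nat \<bar>m\<bar>)"
  using J_main_bound(1) besselJ_abs by metis

lemma BJ_B: "t \<ge> 0 \<Longrightarrow> sqrt t * \<bar>besselJ m t\<bar> \<le> Ak (nat \<bar>m\<bar>)"
  using J_main_bound(2) besselJ_abs by metis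

lemma BJ_S: "0 \<le> t \<Longrightarrow> t \<le> X \<Longrightarrow> \<bar>besselJ m t\<bar> \<le> epsk X (nat \<bar>m\<bar>)"
  using J_small besselJ_abs by metis

lemma F1:
  assumes T: "T > 0" and a: "-1/2 \<le> a" "a \<le> 0"
  shows "\<bar>besselJ m T\<bar> \<le> Ak (nat \<bar>m\<bar>) * T powr a"
proof (cases "T \<le> 1")
  case True
  have p: "T powr (-a) \<le> 1" using T True a by (intro powr_le1) auto
  have p0: "T powr (-a) > 0" using T by simp
  have "1 \<le> inverse (T powr (-a))" using p p0 by (simp add: one_le_inverse)
  then have "1 \<le> T powr a" by (simp add: powr_minus[symmetric])
  then have "Ak (nat \<bar>m\<bar>) * 1 \<le> Ak (nat \<bar>m\<bar>) * T powr a" by (intro mult_left_mono Ak_nonneg)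
  then show ?thesis using BJ_A[of T m] T by simp
next
  case False
  have sT: "sqrt T > 0" using T by simp
  have "sqrt T * \<bar>besselJ m T\<bar> \<le> Ak (nat \<bar>m\<bar>)" using BJ_B[of T m] T by simp
  then have "\<bar>besselJ m T\<bar> \<le> Ak (nat \<bar>m\<bar>) / sqrt T" using sT by (simp add: field_simps)
  also have "\<dots> = Ak (nat \<bar>m\<bar>) * T powr (-(1/2))"
  proof -
    have e1: "T powr (-(1/2)) = inverse (T powr (1/2))" by (rule powr_minus)
    have e2: "T powr (1/2) = sqrt T" using T by (intro powr_half_sqrt) simp
    show ?thesis unfolding e1 e2 by (simp add: divide_inverse)
  qed
  also have "\<dots> \<le> Ak (nat \<bar>m\<bar>) * T powr a"
    using False a by (intro mult_left_mono Ak_nonneg powr_mono) auto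
  finally show ?thesis .
qed

lemma F2:
  assumes y: "y > 0" and X: "X > 0"
  shows "\<bar>besselJ m (X / y)\<bar> \<le> Ak (nat \<bar>m\<bar>) * min 1 (sqrt (y / X))"
proof -
  have A: "\<bar>besselJ m (X/y)\<bar> \<le> Ak (nat \<bar>m\<bar>)" using BJ_A[of "X/y" m] X y by simp
  have "sqrt (X/y) * \<bar>besselJ m (X/y)\<bar> \<le> Ak (nat \<bar>m\<bar>)" using BJ_B[of "X/y" m] X y by simp
  then have "\<bar>besselJ m (X/y)\<bar> \<le> Ak (nat \<bar>m\<bar>) / sqrt (X/y)" using X y by (simp add: field_simps)
  also have "\<dots> = Ak (nat \<bar>m\<bar>) * sqrt (y/X)" using X y by (simp add: real_sqrt_divide field_simps)
  finally have B: "\<bar>besselJ m (X/y)\<bar> \<le> Ak (nat \<bar>m\<bar>) * sqrt (y/X)" .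
  show ?thesis
  proof (cases "sqrt (y/X) \<le> 1")
    case True
    have "min 1 (sqrt (y/X)) = sqrt (y/X)" using True by (rule min_absorb2)
    then show ?thesis using B by simp
  next
    case False
    then have "1 \<le> sqrt (y/X)" by simp
    then have "min 1 (sqrt (y/X)) = 1" by (rule min_absorb1)
    then show ?thesis using A by simp
  qed
qed

lemma norm_jfun: "norm (jfun m s) = 2 * pi * \<bar>besselJ m (4 * pi * s)\<bar>"
  by (simp add: jfun_def norm_mult norm_power_int)

lemma norm_cpowr: "y > 0 \<Longrightarrow> norm (complex_of_real y powr z) = y powr Re z"
  by (subst norm_powr_real_powr) auto

lemma norm_Jint:
  assumes y: "\<forall>l\<in>{1..d}. 0 < y l"
  shows "norm (Jintegrand d \<nu> mm x m y) =
    2 * pi * \<bar>besselJ (mm (d+1) + m) (4*pi*x * (\<Prod>l\<in>{1..d}. y l))\<bar> *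
    (\<Prod>l\<in>{1..d}. y l powr (2 * Re (\<nu> l) - 1) * (2 * pi * \<bar>besselJ (mm l + m) (4*pi*x / y l)\<bar>))"
proof -
  have "norm (Jintegrand d \<nu> mm x m y) = norm (jfun (mm (d + 1) + m) (x * (\<Prod>l\<in>{1..d}. y l))) *
     (\<Prod>l\<in>{1..d}. norm (complex_of_real (y l) powr (2 * \<nu> l - 1) * jfun (mm l + m) (x / y l)))"
    unfolding Jintegrand_def by (simp add: norm_mult prod_norm[symmetric])
  also have "\<dots> = 2 * pi * \<bar>besselJ (mm (d+1) + m) (4*pi*x * (\<Prod>l\<in>{1..d}. y l))\<bar> *
    (\<Prod>l\<in>{1..d}. y l powr (2 * Re (\<nu> l) - 1) * (2 * pi * \<bar>besselJ (mm l + m) (4*pi*x / y l)\<bar>))"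
  proof (intro arg_cong2[where f = "(*)"] prod.cong refl)
    show "norm (jfun (mm (d + 1) + m) (x * (\<Prod>l\<in>{1..d}. y l))) =
      2 * pi * \<bar>besselJ (mm (d+1) + m) (4*pi*x * (\<Prod>l\<in>{1..d}. y l))\<bar>"
      by (simp add: norm_jfun mult.assoc)
    fix l assume "l \<in> {1..d}"
    then have yl: "y l > 0" using y by auto
    show "norm (complex_of_real (y l) powr (2 * \<nu> l - 1) * jfun (mm l + m) (x / y l)) =
      y l powr (2 * Re (\<nu> l) - 1) * (2 * pi * \<bar>besselJ (mm l + m) (4*pi*x / y l)\<bar>)"
      using yl by (simp add: norm_mult norm_cpowr norm_jfun)
  qed
  finally show ?thesis .
qed


definition phi :: "real \<Rightarrow> real \<Rightarrow> nat \<Rightarrow> nat \<Rightarrow> real \<Rightarrow> real" where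
 "phi X e r l t = indicator {0<..} t * (t powr (e - 1) * (if l = r then indicator {1..} t else min 1 (sqrt (t / X))))"

definition Cc :: "real \<Rightarrow> real \<Rightarrow> nat \<Rightarrow> (nat \<Rightarrow> int) \<Rightarrow> nat \<Rightarrow> int \<Rightarrow> real" where
 "Cc X a d mm r m = 2*pi * (if r = 0 then epsk X (nat \<bar>mm (d+1) + m\<bar>) else Ak (nat \<bar>mm (d+1) + m\<bar>) * X powr a) *
    (\<Prod>l\<in>{1..d}. 2*pi * (if l = r then epsk X (nat \<bar>mm l + m\<bar>) else Ak (nat \<bar>mm l + m\<bar>)))"

lemma phi_nonneg: "X \<ge> 0 \<Longrightarrow> phi X e r l t \<ge> 0"
  unfolding phi_def indicator_def by (auto intro!: mult_nonneg_nonneg)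

lemma Cc_nonneg: "X \<ge> 0 \<Longrightarrow> Cc X a d mm r m \<ge> 0"
  unfolding Cc_def using Ak_nonneg epsk_nonneg
  by (intro mult_nonneg_nonneg prod_nonneg) auto

lemma comb:
  fixes f p c q :: "nat \<Rightarrow> real"
  assumes "B0 \<le> c0 * (\<Prod>l\<in>L. p l)" "0 \<le> B0" "0 \<le> c0"
    and "\<And>l. l \<in> L \<Longrightarrow> 0 \<le> f l" "\<And>l. l \<in> L \<Longrightarrow> 0 \<le> p l"
    and "\<And>l. l \<in> L \<Longrightarrow> f l * p l \<le> c l * q l"
  shows "B0 * (\<Prod>l\<in>L. f l) \<le> c0 * (\<Prod>l\<in>L. c l) * (\<Prod>l\<in>L. q l)"
proof -
  have "B0 * (\<Prod>l\<in>L. f l) \<le> (c0 * (\<Prod>l\<in>L. p l)) * (\<Prod>l\<in>L. f l)"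
    using assms by (intro mult_right_mono prod_nonneg) auto
  also have "\<dots> = c0 * (\<Prod>l\<in>L. f l * p l)" by (simp add: prod.distrib algebra_simps)
  also have "\<dots> \<le> c0 * (\<Prod>l\<in>L. c l * q l)"
    using assms by (intro mult_left_mono prod_mono) auto
  also have "\<dots> = c0 * (\<Prod>l\<in>L. c l) * (\<Prod>l\<in>L. q l)" by (simp add: prod.distrib)
  finally show ?thesis .
qed

lemma powr_ge1_small: "0 < Y \<Longrightarrow> Y \<le> 1 \<Longrightarrow> a \<le> 0 \<Longrightarrow> 1 \<le> Y powr (a::real)"
proof -
  assume Y: "0 < Y" "Y \<le> 1" and a: "a \<le> 0"
  have p: "Y powr (-a) \<le> 1" using Y a by (intro powr_le1) auto
  have p0: "Y powr (-a) > 0" using Y by simp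
  have "1 \<le> inverse (Y powr (-a))" using p p0 by (simp add: one_le_inverse)
  then show "1 \<le> Y powr a" by (simp add: powr_minus[symmetric])
qed

lemma factor_bound:
  assumes X: "X > 0" and y: "y > 0" and ry: "l = r \<Longrightarrow> 1 \<le> y"
  shows "y powr (2 * s - 1) * (2 * pi * \<bar>besselJ k (X / y)\<bar>) * y powr a
     \<le> 2 * pi * (if l = r then epsk X (nat \<bar>k\<bar>) else Ak (nat \<bar>k\<bar>)) * phi X (2 * s + a) r l y"
proof -
  have e: "y powr (2 * s - 1) * (2 * pi * \<bar>besselJ k (X / y)\<bar>) * y powr a
      = 2 * pi * (y powr (2 * s + a - 1) * \<bar>besselJ k (X / y)\<bar>)"
  proof -
    have "y powr (2 * s - 1) * y powr a = y powr (2 * s + a - 1)"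
      by (simp add: powr_add[symmetric] algebra_simps)
    then show ?thesis by (simp add: algebra_simps)
  qed
  show ?thesis
  proof (cases "l = r")
    case True
    then have y1: "1 \<le> y" using ry by simp
    have J: "\<bar>besselJ k (X / y)\<bar> \<le> epsk X (nat \<bar>k\<bar>)"
      using X y y1 by (intro BJ_S) (auto simp: field_simps)
    have ph: "phi X (2 * s + a) r l y = y powr (2 * s + a - 1)" unfolding phi_def using True y y1 by simp
    show ?thesis unfolding e ph using True mult_right_mono[OF J, of "y powr (2 * s + a - 1)"]
      by (simp add: algebra_simps)
  next
    case False
    have J: "\<bar>besselJ k (X / y)\<bar> \<le> Ak (nat \<bar>k\<bar>) * min 1 (sqrt (y / X))" by (rule F2[OF y X])
    have ph: "phi X (2 * s + a) r l y = y powr (2 * s + a - 1) * min 1 (sqrt (y / X))"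
      unfolding phi_def using False y by simp
    have "y powr (2 * s + a - 1) * \<bar>besselJ k (X / y)\<bar> \<le> y powr (2 * s + a - 1) * (Ak (nat \<bar>k\<bar>) * min 1 (sqrt (y / X)))"
      using J by (intro mult_left_mono) auto
    then show ?thesis unfolding e ph using False by (simp add: algebra_simps)
  qed
qed

lemma pointwise:
  fixes s :: "nat \<Rightarrow> real"
  assumes X: "X > 0" and a: "-1/2 \<le> a" "a \<le> 0" and y: "\<forall>l\<in>{1..d}. 0 < y l"
  shows "2 * pi * \<bar>besselJ (mm (d+1) + m) (X * (\<Prod>l\<in>{1..d}. y l))\<bar> *
    (\<Prod>l\<in>{1..d}. y l powr (2 * s l - 1) * (2 * pi * \<bar>besselJ (mm l + m) (X / y l)\<bar>))
    \<le> (\<Sum>r\<in>{0..d}. Cc X a d mm r m * (\<Prod>l\<in>{1..d}. phi X (2 * s l + a) r l (y l)))"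
proof -
  let ?Y = "\<Prod>l\<in>{1..d}. y l"
  let ?B0 = "2 * pi * \<bar>besselJ (mm (d+1) + m) (X * ?Y)\<bar>"
  let ?f = "\<lambda>l. y l powr (2 * s l - 1) * (2 * pi * \<bar>besselJ (mm l + m) (X / y l)\<bar>)"
  let ?T = "\<lambda>r. Cc X a d mm r m * (\<Prod>l\<in>{1..d}. phi X (2 * s l + a) r l (y l))"
  have Ypos: "?Y > 0" using y by (intro prod_pos) auto
  have Ypow: "(\<Prod>l\<in>{1..d}. y l powr a) = ?Y powr a" by (simp add: prod_powr_distrib)
  have key: "\<exists>r\<in>{0..d}. ?B0 * (\<Prod>l\<in>{1..d}. ?f l) \<le> ?T r"
  proof (cases "?Y \<le> 1")
    case True
    have h0: "?B0 \<le> (2 * pi * epsk X (nat \<bar>mm (d+1) + m\<bar>)) * (\<Prod>l\<in>{1..d}. y l powr a)"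
    proof -
      have J: "\<bar>besselJ (mm (d+1) + m) (X * ?Y)\<bar> \<le> epsk X (nat \<bar>mm (d+1) + m\<bar>)"
        using X Ypos True by (intro BJ_S) (auto simp: mult_left_le)
      have "1 \<le> ?Y powr a" using Ypos True a by (intro powr_ge1_small) auto
      then have "epsk X (nat \<bar>mm (d+1) + m\<bar>) * 1 \<le> epsk X (nat \<bar>mm (d+1) + m\<bar>) * ?Y powr a"
        using X epsk_nonneg by (intro mult_left_mono) auto
      with J show ?thesis unfolding Ypow by simp
    qed
    have "?B0 * (\<Prod>l\<in>{1..d}. ?f l) \<le> (2 * pi * epsk X (nat \<bar>mm (d+1) + m\<bar>)) *
        (\<Prod>l\<in>{1..d}. 2 * pi * (if l = 0 then epsk X (nat \<bar>mm l + m\<bar>) else Ak (nat \<bar>mm l + m\<bar>))) *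
        (\<Prod>l\<in>{1..d}. phi X (2 * s l + a) 0 l (y l))"
    proof (rule comb[OF h0])
      fix l assume l: "l \<in> {1..d}"
      show "?f l * y l powr a \<le> 2 * pi * (if l = 0 then epsk X (nat \<bar>mm l + m\<bar>) else Ak (nat \<bar>mm l + m\<bar>)) *
          phi X (2 * s l + a) 0 l (y l)"
        using l y by (intro factor_bound X) auto
    qed (use X epsk_nonneg in auto)
    also have "\<dots> = ?T 0" unfolding Cc_def by simp
    finally show ?thesis by force
  next
    case False
    obtain r where r: "r \<in> {1..d}" "1 \<le> y r"
    proof -
      have "\<not> (\<forall>l\<in>{1..d}. y l < 1)"
      proof
        assume "\<forall>l\<in>{1..d}. y l < 1"
        then have "?Y \<le> 1" using y by (intro prod_le_1) (auto simp: less_imp_le)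
        with False show False by simp
      qed
      then show ?thesis using that by force
    qed
    have h0: "?B0 \<le> (2 * pi * (Ak (nat \<bar>mm (d+1) + m\<bar>) * X powr a)) * (\<Prod>l\<in>{1..d}. y l powr a)"
    proof -
      have J: "\<bar>besselJ (mm (d+1) + m) (X * ?Y)\<bar> \<le> Ak (nat \<bar>mm (d+1) + m\<bar>) * (X * ?Y) powr a"
        using X Ypos a by (intro F1) auto
      have "(X * ?Y) powr a = X powr a * ?Y powr a" using X Ypos by (simp add: powr_mult)
      with J show ?thesis unfolding Ypow by (simp add: algebra_simps)
    qed
    have "?B0 * (\<Prod>l\<in>{1..d}. ?f l) \<le> (2 * pi * (Ak (nat \<bar>mm (d+1) + m\<bar>) * X powr a)) *
        (\<Prod>l\<in>{1..d}. 2 * pi * (if l = r then epsk X (nat \<bar>mm l + m\<bar>) else Ak (nat \<bar>mm l + m\<bar>))) *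
        (\<Prod>l\<in>{1..d}. phi X (2 * s l + a) r l (y l))"
    proof (rule comb[OF h0])
      fix l assume l: "l \<in> {1..d}"
      show "?f l * y l powr a \<le> 2 * pi * (if l = r then epsk X (nat \<bar>mm l + m\<bar>) else Ak (nat \<bar>mm l + m\<bar>)) *
          phi X (2 * s l + a) r l (y l)"
        using l y r by (intro factor_bound X) auto
    qed (use X Ak_nonneg in auto)
    also have "\<dots> = ?T r" unfolding Cc_def using r by simp
    finally show ?thesis using r by force
  qed
  then obtain r where r: "r \<in> {0..d}" "?B0 * (\<Prod>l\<in>{1..d}. ?f l) \<le> ?T r" by blast
  have le: "?T r \<le> (\<Sum>r\<in>{0..d}. ?T r)"
    using r(1) X Cc_nonneg phi_nonneg
    by (intro member_le_sum mult_nonneg_nonneg prod_nonneg) auto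
  show ?thesis using order_trans[OF r(2) le] by simp
qed


lemma to_lborel:
  fixes f :: "real \<Rightarrow> real"
  assumes "f absolutely_integrable_on A" "A \<in> sets borel" "f \<in> borel_measurable borel"
  shows "integrable lborel (\<lambda>t. indicator A t * f t)"
proof -
  have "integrable lebesgue (\<lambda>t. indicator A t *\<^sub>R f t)" using assms(1) by (simp add: set_integrable_def)
  moreover have m: "(\<lambda>t. indicator A t *\<^sub>R f t) \<in> borel_measurable lborel" using assms(2,3) by measurable
  ultimately have "integrable lborel (\<lambda>t. indicator A t *\<^sub>R f t)" using integrable_completion[OF m] by simp
  then show ?thesis by simp
qed

lemma I1:
  fixes p :: real
  assumes p: "p > -1"
  shows "integrable lborel (\<lambda>t. indicator {0<..1} t * t powr p)"
proof -
  have "(\<lambda>t. t powr p) integrable_on {0<..1::real}" by (rule integrable_on_powr_from_0') (use p in auto)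
  then have "(\<lambda>t. t powr p) absolutely_integrable_on {0<..1::real}"
    by (rule nonnegative_absolutely_integrable_1) simp
  then show ?thesis by (rule to_lborel) auto
qed

lemma I2:
  fixes p :: real
  assumes p: "p < -1"
  shows "integrable lborel (\<lambda>t. indicator {1..} t * t powr p)"
proof -
  have "(\<lambda>t. t powr p) integrable_on {1::real..}"
    using has_integral_powr_to_inf[of p 1] p unfolding integrable_on_def by auto
  then have "(\<lambda>t. t powr p) absolutely_integrable_on {1::real..}"
    by (rule nonnegative_absolutely_integrable_1) simp
  then show ?thesis by (rule to_lborel) auto
qed

lemma phi_measurable [measurable]: "phi X e r l \<in> borel_measurable borel"
  unfolding phi_def by measurable

lemma phi_integrable:
  assumes X: "X > 0" and e: "-1/2 < e" "e < 0"
  shows "integrable lborel (phi X e r l)"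
proof (cases "l = r")
  case True
  have "phi X e r l = (\<lambda>t. indicator {1..} t * t powr (e - 1))"
    unfolding phi_def using True by (auto simp: indicator_def fun_eq_iff)
  then show ?thesis using I2[of "e - 1"] e by simp
next
  case False
  let ?g = "\<lambda>t. X powr (-(1/2)) * (indicator {0<..1} t * t powr (e - 1/2)) + indicator {1..} t * t powr (e - 1)"
  have i1: "integrable lborel (\<lambda>t. indicator {0<..1} t * t powr (e - 1/2))" using I1[of "e - 1/2"] e by simp
  have i2: "integrable lborel (\<lambda>t. indicator {1..} t * t powr (e - 1))" using I2[of "e - 1"] e by simp
  have i3: "integrable lborel (\<lambda>t. X powr (-(1/2)) * (indicator {0<..1} t * t powr (e - 1/2)))"
    using i1 by (rule integrable_mult_right)
  have gi: "integrable lborel ?g"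
    using Bochner_Integration.integrable_add[OF i3 i2] by simp
  show ?thesis
  proof (rule Bochner_Integration.integrable_bound[OF gi])
    show "phi X e r l \<in> borel_measurable lborel" by measurable
    show "AE t in lborel. norm (phi X e r l t) \<le> norm (?g t)"
    proof (rule AE_I2)
      fix t :: real
      have g0: "?g t \<ge> 0" by (auto simp: indicator_def)
      have "phi X e r l t \<le> ?g t"
      proof (cases "t \<le> 0")
        case True then show ?thesis using g0 by (simp add: phi_def)
      next
        case tpos: False
        then have t: "t > 0" by simp
        show ?thesis
        proof (cases "t \<le> 1")
          case True
          have "phi X e r l t = t powr (e - 1) * min 1 (sqrt (t / X))"
            unfolding phi_def using False t by simp
          also have "\<dots> \<le> t powr (e - 1) * sqrt (t / X)" by (intro mult_left_mono) auto
          also have "sqrt (t / X) = t powr (1/2) * X powr (-(1/2))"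
          proof -
            have e1: "X powr (-(1/2)) = inverse (X powr (1/2))" by (rule powr_minus)
            have e2: "X powr (1/2) = sqrt X" using X by (intro powr_half_sqrt) simp
            have e3: "t powr (1/2) = sqrt t" using t by (intro powr_half_sqrt) simp
            show ?thesis unfolding e1 e2 e3 real_sqrt_divide by (simp add: divide_inverse)
          qed
          also have "t powr (e - 1) * (t powr (1/2) * X powr (-(1/2))) = X powr (-(1/2)) * t powr (e - 1/2)"
            by (simp add: powr_add[symmetric] algebra_simps)
          also have "\<dots> \<le> ?g t" using t True by (simp add: indicator_def)
          finally show ?thesis .
        next
          case gt: False
          have "phi X e r l t = t powr (e - 1) * min 1 (sqrt (t / X))"
            unfolding phi_def using False t by simp
          also have "\<dots> \<le> t powr (e - 1) * 1" by (intro mult_left_mono) auto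
          also have "\<dots> \<le> ?g t" using t gt by (simp add: indicator_def)
          finally show ?thesis .
        qed
      qed
      then show "norm (phi X e r l t) \<le> norm (?g t)" using g0 phi_nonneg[of X e r l t] X by simp
    qed
  qed
qed


definition Wc :: "int \<Rightarrow> real" where "Wc c = 4 * exp 2 * exp 3 ^ nat \<bar>c\<bar>"

lemma Wc_ge1: "1 \<le> Wc c"
proof -
  have "1 \<le> exp (2::real)" by simp
  moreover have "1 \<le> exp (3::real) ^ nat \<bar>c\<bar>" by (rule one_le_power) simp
  ultimately have "1 * 1 \<le> exp (2::real) * exp 3 ^ nat \<bar>c\<bar>" by (intro mult_mono) auto
  then show ?thesis unfolding Wc_def by simp
qed

lemma Wc_nonneg: "0 \<le> Wc c" using Wc_ge1[of c] by linarith

lemma Ak_shift: "Ak (nat \<bar>c + m\<bar>) \<le> Wc c * exp 3 ^ nat \<bar>m\<bar>"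
proof -
  have t: "nat \<bar>c + m\<bar> \<le> nat \<bar>c\<bar> + nat \<bar>m\<bar>" by (simp add: nat_le_iff abs_triangle_ineq)
  have "Ak (nat \<bar>c + m\<bar>) \<le> 4 * exp 2 * exp 3 ^ nat \<bar>c + m\<bar>" by (rule Ak_growth)
  also have "\<dots> \<le> 4 * exp 2 * exp 3 ^ (nat \<bar>c\<bar> + nat \<bar>m\<bar>)"
    by (intro mult_left_mono power_increasing t) auto
  also have "\<dots> = Wc c * exp 3 ^ nat \<bar>m\<bar>" unfolding Wc_def by (simp add: power_add)
  finally show ?thesis .
qed

definition cr :: "(nat \<Rightarrow> int) \<Rightarrow> nat \<Rightarrow> nat \<Rightarrow> int" where
  "cr mm d r = (if r = 0 then mm (d+1) else mm r)"

definition CC :: "real \<Rightarrow> real \<Rightarrow> nat \<Rightarrow> (nat \<Rightarrow> int) \<Rightarrow> nat \<Rightarrow> real" where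
  "CC X a d mm r = 2 * pi * (if r = 0 then 1 else X powr a * Wc (mm (d+1))) * (2*pi)^d * (\<Prod>l\<in>{1..d}. Wc (mm l))"

lemma Cc_bound:
  assumes X: "X > 0" and r: "r \<in> {0..d}"
  shows "Cc X a d mm r m \<le> CC X a d mm r * (exp 3 ^ (d+1)) ^ nat \<bar>m\<bar> * epsk X (nat \<bar>m + cr mm d r\<bar>)"
proof -
  define q where "q = exp (3::real) ^ nat \<bar>m\<bar>"
  have q1: "1 \<le> q" unfolding q_def by (rule one_le_power) simp
  define E where "E = (\<lambda>l. epsk X (nat \<bar>mm l + m\<bar>))"
  have E0: "\<And>l. 0 \<le> E l" unfolding E_def using X epsk_nonneg by simp
  define P where "P = (\<Prod>l\<in>{1..d}. 2*pi * (if l = r then epsk X (nat \<bar>mm l + m\<bar>) else Ak (nat \<bar>mm l + m\<bar>)))"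
  have WQ: "1 \<le> Wc (mm l) * q" for l
  proof -
    have "1 * 1 \<le> Wc (mm l) * q" by (rule mult_mono[OF Wc_ge1 q1]) (auto simp: Wc_nonneg)
    then show ?thesis by simp
  qed
  have "P \<le> (\<Prod>l\<in>{1..d}. 2*pi * ((if l = r then E l else 1) * (Wc (mm l) * q)))"
    unfolding P_def
  proof (rule prod_mono, intro conjI)
    fix l assume "l \<in> {1..d}"
    show "0 \<le> 2*pi * (if l = r then epsk X (nat \<bar>mm l + m\<bar>) else Ak (nat \<bar>mm l + m\<bar>))"
      using X epsk_nonneg Ak_nonneg by simp
    show "2*pi * (if l = r then epsk X (nat \<bar>mm l + m\<bar>) else Ak (nat \<bar>mm l + m\<bar>))
       \<le> 2*pi * ((if l = r then E l else 1) * (Wc (mm l) * q))"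
    proof (cases "l = r")
      case True
      have "E l * 1 \<le> E l * (Wc (mm l) * q)" by (intro mult_left_mono WQ E0)
      then show ?thesis using True unfolding E_def by simp
    next
      case False
      then show ?thesis using Ak_shift[of "mm l" m] unfolding q_def by simp
    qed
  qed
  also have "\<dots> = (2*pi)^d * (\<Prod>l\<in>{1..d}. (if l = r then E l else 1)) * (\<Prod>l\<in>{1..d}. Wc (mm l)) * q^d"
    by (simp add: prod.distrib)
  also have "(\<Prod>l\<in>{1..d}. (if l = r then E l else 1)) = (if r \<in> {1..d} then E r else 1)"
    by simp
  finally have Pb: "P \<le> (2*pi)^d * (if r \<in> {1..d} then E r else 1) * (\<Prod>l\<in>{1..d}. Wc (mm l)) * q^d" .
  have Pn: "0 \<le> P" unfolding P_def using X epsk_nonneg Ak_nonneg by (intro prod_nonneg) simp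
  have Wn: "0 \<le> (\<Prod>l\<in>{1..d}. Wc (mm l))" using Wc_nonneg by (intro prod_nonneg) auto
  have qd: "q^d \<le> q^(d+1)" using q1 by (intro power_increasing) auto
  have qq: "(exp 3 ^ (d+1)) ^ nat \<bar>m\<bar> = q^(d+1)" unfolding q_def by (metis power_mult mult.commute)
  show ?thesis
  proof (cases "r = 0")
    case True
    have cr: "cr mm d r = mm (d+1)" unfolding cr_def using True by simp
    have "Cc X a d mm r m = 2*pi * epsk X (nat \<bar>mm (d+1) + m\<bar>) * P" unfolding Cc_def P_def using True by simp
    also have "\<dots> \<le> 2*pi * epsk X (nat \<bar>mm (d+1) + m\<bar>) * ((2*pi)^d * 1 * (\<Prod>l\<in>{1..d}. Wc (mm l)) * q^(d+1))"
    proof (intro mult_left_mono order_trans[OF Pb])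
      show "(2*pi)^d * (if r \<in> {1..d} then E r else 1) * (\<Prod>l\<in>{1..d}. Wc (mm l)) * q^d
          \<le> (2*pi)^d * 1 * (\<Prod>l\<in>{1..d}. Wc (mm l)) * q^(d+1)"
        using True qd Wn q1 by (intro mult_mono) auto
    qed (use X epsk_nonneg in auto)
    also have "\<dots> = CC X a d mm r * (exp 3 ^ (d+1)) ^ nat \<bar>m\<bar> * epsk X (nat \<bar>m + cr mm d r\<bar>)"
      unfolding CC_def qq cr using True by (simp add: algebra_simps)
    finally show ?thesis .
  next
    case False
    then have rr: "r \<in> {1..d}" using r by auto
    have cr: "cr mm d r = mm r" unfolding cr_def using False by simp
    have A0: "Ak (nat \<bar>mm (d+1) + m\<bar>) \<le> Wc (mm (d+1)) * q" using Ak_shift unfolding q_def by simp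
    have "Cc X a d mm r m = 2*pi * (Ak (nat \<bar>mm (d+1) + m\<bar>) * X powr a) * P" unfolding Cc_def P_def using False by simp
    also have "\<dots> \<le> 2*pi * (Wc (mm (d+1)) * q * X powr a) * ((2*pi)^d * E r * (\<Prod>l\<in>{1..d}. Wc (mm l)) * q^d)"
    proof (intro mult_mono)
      show "P \<le> (2*pi)^d * E r * (\<Prod>l\<in>{1..d}. Wc (mm l)) * q^d" using Pb rr by simp
    qed (use A0 Pn Ak_nonneg q1 Wc_nonneg[of "mm (d+1)"] in \<open>auto intro!: mult_nonneg_nonneg\<close>)
    also have "\<dots> = CC X a d mm r * (q * q^d) * E r"
      unfolding CC_def using False by (simp add: algebra_simps)
    also have "\<dots> = CC X a d mm r * (exp 3 ^ (d+1)) ^ nat \<bar>m\<bar> * epsk X (nat \<bar>m + cr mm d r\<bar>)"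
      unfolding qq cr E_def by (simp add: add.commute)
    finally show ?thesis .
  qed
qed

lemma Cc_summable:
  assumes X: "X > 0" and r: "r \<in> {0..d}"
  shows "(\<lambda>m. Cc X a d mm r m) summable_on UNIV"
proof -
  have R: "1 \<le> exp (3::real) ^ (d+1)" by (rule one_le_power) simp
  have "(\<lambda>m::int. (exp 3 ^ (d+1)) ^ nat \<bar>m\<bar> * epsk X (nat \<bar>m + cr mm d r\<bar>)) summable_on UNIV"
    by (rule sum_eps[OF R]) (use X in simp)
  then have s: "(\<lambda>m::int. CC X a d mm r * ((exp 3 ^ (d+1)) ^ nat \<bar>m\<bar> * epsk X (nat \<bar>m + cr mm d r\<bar>))) summable_on UNIV"
    by (rule summable_on_cmult_right)
  show ?thesis
  proof (rule summable_on_comparison_test[OF s])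
    fix m :: int
    show "Cc X a d mm r m \<le> CC X a d mm r * ((exp 3 ^ (d+1)) ^ nat \<bar>m\<bar> * epsk X (nat \<bar>m + cr mm d r\<bar>))"
      using Cc_bound[OF X r, of a mm m] by (simp add: algebra_simps)
    show "0 \<le> Cc X a d mm r m" using Cc_nonneg X by simp
  qed
qed


lemma besselJ_cont: "continuous_on UNIV (besselJ k)"
proof (cases "0 \<le> k")
  case True
  then have "besselJ k = besselJ_nat (nat k)" by (auto simp: besselJ_def fun_eq_iff)
  then show ?thesis by (simp add: J_cont)
next
  case False
  then have "besselJ k = (\<lambda>t. (-1)^nat(-k) * besselJ_nat (nat (-k)) t)" by (auto simp: besselJ_def fun_eq_iff)
  then show ?thesis by (auto intro!: continuous_intros)
qed

lemma besselJ_meas [measurable]: "besselJ k \<in> borel_measurable borel"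
  by (rule borel_measurable_continuous_onI[OF besselJ_cont])

lemma jfun_meas [measurable]: "jfun k \<in> borel_measurable borel"
  unfolding jfun_def[abs_def] by measurable

definition Jint2 :: "nat \<Rightarrow> (nat \<Rightarrow> complex) \<Rightarrow> (nat \<Rightarrow> int) \<Rightarrow> real \<Rightarrow> int \<Rightarrow> (nat \<Rightarrow> real) \<Rightarrow> complex" where
  "Jint2 d \<nu> mm x m y =
     jfun (mm (d + 1) + m) (x * (\<Prod>l\<in>{1..d}. y l)) *
     (\<Prod>l\<in>{1..d}. exp ((2 * \<nu> l - 1) * complex_of_real (ln (y l))) * jfun (mm l + m) (x / y l))"

lemma Jint2_meas: "Jint2 d \<nu> mm x m \<in> borel_measurable (PiM {1..d} (\<lambda>_. lborel))"
proof -
  let ?M = "PiM {1..d} (\<lambda>_::nat. lborel::real measure)"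
  have c: "(\<lambda>y. y l) \<in> borel_measurable ?M" if "l \<in> {1..d}" for l
    using measurable_component_singleton[OF that, of "\<lambda>_. lborel"] by simp
  have p1: "(\<lambda>y. \<Prod>l\<in>{1..d}. y l) \<in> borel_measurable ?M"
    by (rule borel_measurable_prod) (rule c)
  have p2: "(\<lambda>y. \<Prod>l\<in>{1..d}. exp ((2 * \<nu> l - 1) * complex_of_real (ln (y l))) * jfun (mm l + m) (x / y l))
      \<in> borel_measurable ?M"
  proof (rule borel_measurable_prod)
    fix l assume l: "l \<in> {1..d}"
    have g: "(\<lambda>t. exp ((2 * \<nu> l - 1) * complex_of_real (ln t)) * jfun (mm l + m) (x / t)) \<in> borel_measurable borel"
      by measurable
    show "(\<lambda>y. exp ((2 * \<nu> l - 1) * complex_of_real (ln (y l))) * jfun (mm l + m) (x / y l)) \<in> borel_measurable ?M"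
      using measurable_compose[OF c[OF l] g] by simp
  qed
  have p3: "(\<lambda>y. jfun (mm (d + 1) + m) (x * (\<Prod>l\<in>{1..d}. y l))) \<in> borel_measurable ?M"
    using measurable_compose[OF p1, of "\<lambda>t. jfun (mm (d + 1) + m) (x * t)"] by measurable
  show ?thesis unfolding Jint2_def[abs_def]
    using p2 p3 by measurable
qed

lemma Jint_eq_Jint2:
  assumes y: "\<forall>l\<in>{1..d}. 0 < y l"
  shows "Jintegrand d \<nu> mm x m y = Jint2 d \<nu> mm x m y"
proof -
  have "(\<Prod>l\<in>{1..d}. complex_of_real (y l) powr (2 * \<nu> l - 1) * jfun (mm l + m) (x / y l)) =
        (\<Prod>l\<in>{1..d}. exp ((2 * \<nu> l - 1) * complex_of_real (ln (y l))) * jfun (mm l + m) (x / y l))"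
  proof (rule prod.cong[OF refl])
    fix l assume "l \<in> {1..d}"
    then have yl: "y l > 0" using y by auto
    have "complex_of_real (y l) powr (2 * \<nu> l - 1) = exp ((2 * \<nu> l - 1) * complex_of_real (ln (y l)))"
      using yl by (simp add: powr_def Ln_of_real)
    then show "complex_of_real (y l) powr (2 * \<nu> l - 1) * jfun (mm l + m) (x / y l) =
         exp ((2 * \<nu> l - 1) * complex_of_real (ln (y l))) * jfun (mm l + m) (x / y l)" by simp
  qed
  then show ?thesis unfolding Jintegrand_def Jint2_def by simp
qed

theorem proposition6p11:
  fixes n d :: nat and \<nu> :: "nat \<Rightarrow> complex" and mm :: "nat \<Rightarrow> int"
    and x :: real and u :: complex
  assumes "n \<ge> 2" and "d = n - 1"
    and "\<exists>a\<in>{-1/2..0::real}. \<forall>l\<in>{1..d}. -1/4 - a/2 < Re (\<nu> l) \<and> Re (\<nu> l) < - a/2"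
    and "x > 0" and "norm u = 1"
  shows "(\<forall>m::int. set_integrable (PiM {1..d} (\<lambda>_. lborel)) {y. \<forall>l\<in>{1..d}. 0 < y l}
                 (\<lambda>y. u powi m * Jintegrand d \<nu> mm x m y))
       \<and> (\<lambda>m::int. LINT y:{y. \<forall>l\<in>{1..d}. 0 < y l}|PiM {1..d} (\<lambda>_. lborel).
                 norm (u powi m * Jintegrand d \<nu> mm x m y)) summable_on UNIV"
proof -
  obtain a where a: "a \<in> {-1/2..0::real}" and a\<nu>: "\<forall>l\<in>{1..d}. -1/4 - a/2 < Re (\<nu> l) \<and> Re (\<nu> l) < - a/2"
    using assms(3) by blast
  have a1: "-1/2 \<le> a" "a \<le> 0" using a by auto
  have X: "4*pi*x > 0" using assms(4) by simp
  have u1: "norm (u powi m) = 1" for m using assms(5) by (simp add: norm_power_int)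
  let ?M = "PiM {1..d} (\<lambda>_::nat. lborel::real measure)"
  let ?S = "{y::nat\<Rightarrow>real. \<forall>l\<in>{1..d}. 0 < y l}"
  define e where "e l = 2 * Re (\<nu> l) + a" for l
  have erange: "-1/2 < e l \<and> e l < 0" if "l \<in> {1..d}" for l
    using a\<nu> that unfolding e_def by force
  interpret P: product_sigma_finite "\<lambda>_::nat. lborel::real measure" by standard
  define Bd where "Bd m y = (\<Sum>r\<in>{0..d}. Cc (4*pi*x) a d mm r m * (\<Prod>l\<in>{1..d}. phi (4*pi*x) (e l) r l (y l)))" for m y
  define K where "K r = (\<Prod>l\<in>{1..d}. integral\<^sup>L lborel (phi (4*pi*x) (e l) r l))" for r
  have phi_int: "integrable lborel (phi (4*pi*x) (e l) r l)" if "l \<in> {1..d}" for r l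
    using erange[OF that] X by (intro phi_integrable) auto
  have prod_int: "integrable ?M (\<lambda>y. \<Prod>l\<in>{1..d}. phi (4*pi*x) (e l) r l (y l))" for r
    by (rule P.product_integrable_prod) (auto intro: phi_int)
  have Bd_int: "integrable ?M (Bd m)" for m
    unfolding Bd_def[abs_def] by (rule Bochner_Integration.integrable_sum) (intro integrable_mult_right prod_int)
  have Bd_nonneg: "0 \<le> Bd m y" for m y
    unfolding Bd_def using X Cc_nonneg phi_nonneg
    by (intro sum_nonneg mult_nonneg_nonneg prod_nonneg) auto
  have Bd_integral: "integral\<^sup>L ?M (Bd m) = (\<Sum>r\<in>{0..d}. Cc (4*pi*x) a d mm r m * K r)" for m
  proof -
    have "integral\<^sup>L ?M (Bd m) = (\<Sum>r\<in>{0..d}. integral\<^sup>L ?M (\<lambda>y. Cc (4*pi*x) a d mm r m * (\<Prod>l\<in>{1..d}. phi (4*pi*x) (e l) r l (y l))))"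
      unfolding Bd_def[abs_def] by (rule Bochner_Integration.integral_sum) (intro integrable_mult_right prod_int)
    also have "\<dots> = (\<Sum>r\<in>{0..d}. Cc (4*pi*x) a d mm r m * K r)"
    proof (intro sum.cong refl)
      fix r
      have pip: "integral\<^sup>L ?M (\<lambda>y. \<Prod>l\<in>{1..d}. phi (4*pi*x) (e l) r l (y l)) = K r"
        unfolding K_def by (rule P.product_integral_prod) (auto intro: phi_int)
      show "integral\<^sup>L ?M (\<lambda>y. Cc (4*pi*x) a d mm r m * (\<Prod>l\<in>{1..d}. phi (4*pi*x) (e l) r l (y l))) =
          Cc (4*pi*x) a d mm r m * K r" unfolding integral_mult_right_zero pip by (rule refl)
    qed
    finally show ?thesis .
  qed
  have eqS: "indicator ?S y = (\<Prod>l\<in>{1..d}. indicator {0<..} (y l) :: real)" for y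
  proof (cases "y \<in> ?S")
    case True then show ?thesis by (simp add: indicator_def)
  next
    case False
    then obtain l where l: "l \<in> {1..d}" "\<not> 0 < y l" by auto
    then have "(\<Prod>l\<in>{1..d}. indicator {0<..} (y l) :: real) = 0"
      by (intro prod_zero) (auto simp: indicator_def)
    then show ?thesis using False by simp
  qed
  have ind_meas: "(\<lambda>y. indicator ?S y :: real) \<in> borel_measurable ?M"
  proof -
    have c: "(\<lambda>y. y l) \<in> borel_measurable ?M" if "l \<in> {1..d}" for l
      using measurable_component_singleton[OF that, of "\<lambda>_. lborel"] by simp
    have "(\<lambda>y. \<Prod>l\<in>{1..d}. indicator {0<..} (y l) :: real) \<in> borel_measurable ?M"
    proof (rule borel_measurable_prod)
      fix l assume l: "l \<in> {1..d}"
      have g: "(\<lambda>t::real. indicator {0<..} t :: real) \<in> borel_measurable borel" by measurable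
      show "(\<lambda>y. indicator {0<..} (y l) :: real) \<in> borel_measurable ?M"
        using measurable_compose[OF c[OF l] g] by simp
    qed
    then show ?thesis unfolding eqS .
  qed
  have f_eq: "indicator ?S y *\<^sub>R (u powi m * Jintegrand d \<nu> mm x m y) = indicator ?S y *\<^sub>R (u powi m * Jint2 d \<nu> mm x m y)" for y m
    using Jint_eq_Jint2[of d y \<nu> mm x m] by (cases "y \<in> ?S") auto
  have f_meas: "(\<lambda>y. indicator ?S y *\<^sub>R (u powi m * Jintegrand d \<nu> mm x m y)) \<in> borel_measurable ?M" for m
  proof -
    have "(\<lambda>y. indicator ?S y *\<^sub>R (u powi m * Jint2 d \<nu> mm x m y)) \<in> borel_measurable ?M"
      using ind_meas Jint2_meas[of d \<nu> mm x m] by measurable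
    then show ?thesis unfolding f_eq .
  qed
  have pw: "norm (indicator ?S y *\<^sub>R (u powi m * Jintegrand d \<nu> mm x m y)) \<le> Bd m y" for m y
  proof (cases "y \<in> ?S")
    case True
    then have y: "\<forall>l\<in>{1..d}. 0 < y l" by simp
    have "norm (indicator ?S y *\<^sub>R (u powi m * Jintegrand d \<nu> mm x m y)) = norm (Jintegrand d \<nu> mm x m y)"
      using True u1 by (simp add: norm_mult)
    also have "\<dots> = 2 * pi * \<bar>besselJ (mm (d+1) + m) (4*pi*x * (\<Prod>l\<in>{1..d}. y l))\<bar> *
      (\<Prod>l\<in>{1..d}. y l powr (2 * Re (\<nu> l) - 1) * (2 * pi * \<bar>besselJ (mm l + m) (4*pi*x / y l)\<bar>))"
      by (rule norm_Jint[OF y])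
    also have "\<dots> \<le> Bd m y"
      unfolding Bd_def e_def using pointwise[OF X a1 y, of mm m "\<lambda>l. Re (\<nu> l)"] by simp
    finally show ?thesis .
  next
    case False
    then show ?thesis using Bd_nonneg by simp
  qed
  have si: "set_integrable ?M ?S (\<lambda>y. u powi m * Jintegrand d \<nu> mm x m y)" for m
    unfolding set_integrable_def
  proof (rule Bochner_Integration.integrable_bound[OF Bd_int f_meas])
    show "AE y in ?M. norm (indicator ?S y *\<^sub>R (u powi m * Jintegrand d \<nu> mm x m y)) \<le> norm (Bd m y)"
      using pw Bd_nonneg by (intro AE_I2) (simp add: order_trans[OF pw])
  qed
  have Lle: "(LINT y:?S|?M. norm (u powi m * Jintegrand d \<nu> mm x m y)) \<le> (\<Sum>r\<in>{0..d}. Cc (4*pi*x) a d mm r m * K r)" for m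
  proof -
    have i1: "integrable ?M (\<lambda>y. norm (indicator ?S y *\<^sub>R (u powi m * Jintegrand d \<nu> mm x m y)))"
      using si[of m] unfolding set_integrable_def by (rule integrable_norm)
    have e1: "(\<lambda>y. norm (indicator ?S y *\<^sub>R (u powi m * Jintegrand d \<nu> mm x m y))) =
        (\<lambda>y. indicator ?S y *\<^sub>R norm (u powi m * Jintegrand d \<nu> mm x m y))"
      by (auto simp: indicator_def fun_eq_iff)
    have "(LINT y:?S|?M. norm (u powi m * Jintegrand d \<nu> mm x m y))
        = integral\<^sup>L ?M (\<lambda>y. norm (indicator ?S y *\<^sub>R (u powi m * Jintegrand d \<nu> mm x m y)))"
      unfolding set_lebesgue_integral_def e1 ..
    also have "\<dots> \<le> integral\<^sup>L ?M (Bd m)"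
      by (rule integral_mono[OF i1 Bd_int]) (rule pw)
    also have "\<dots> = (\<Sum>r\<in>{0..d}. Cc (4*pi*x) a d mm r m * K r)" by (rule Bd_integral)
    finally show ?thesis .
  qed
  have Lnn: "0 \<le> (LINT y:?S|?M. norm (u powi m * Jintegrand d \<nu> mm x m y))" for m
    unfolding set_lebesgue_integral_def by (rule Bochner_Integration.integral_nonneg) (simp add: indicator_def)
  have sumB: "(\<lambda>m. \<Sum>r\<in>{0..d}. Cc (4*pi*x) a d mm r m * K r) summable_on UNIV"
  proof (rule summable_on_finsum)
    fix r assume r: "r \<in> {0..d}"
    show "(\<lambda>m. Cc (4*pi*x) a d mm r m * K r) summable_on UNIV"
      by (rule summable_on_cmult_left[OF Cc_summable[OF X r]])
  qed simp
  show ?thesis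
  proof
    show "\<forall>m. set_integrable ?M ?S (\<lambda>y. u powi m * Jintegrand d \<nu> mm x m y)" using si by blast
    show "(\<lambda>m::int. LINT y:?S|?M. norm (u powi m * Jintegrand d \<nu> mm x m y)) summable_on UNIV"
      by (rule summable_on_comparison_test[OF sumB Lle Lnn])
  qed
qed


end
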